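(* Let $c>0$ be fixed, let $k\in\mathbb{N}$, let $\phi_k(x)=(x^2+c^2)^{k-1/2}$, and let $1\le p<\infty$. Let $\{x_j\}_{j\in\mathbb{Z}}\subset\mathbb{R}$ be a scattered sequence. Then for every $\epsilon>0$ and every continuous function $f:[a,b]\to\mathbb{R}$ there exist $N\in\mathbb{N}$ and real coefficients $a_1,\dots,a_N$ such that \[ \left\|f-\sum_{j=1}^{N}a_j\phi_k(\cdot-x_j)\right\|_{L^p([a,b])}<\epsilon . \]
   Context: A sequence $\mathcal{X}$ of real numbers is $\delta$-separated if $\inf_{x,y\in\mathcal{X},\,x\neq y}|x-y|=\delta>0$. A sequence $\{x_j\}_{j\in\mathbb{Z}}\subset\mathbb{R}$ is called scattered if it is $\delta$-separated for some $\delta>0$ and $\lim_{j\to\pm\infty}x_j=\pm\infty$. *)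

theory Defs
  imports "HOL-Analysis.Analysis"
begin

definition separated_by :: "real set \<Rightarrow> real \<Rightarrow> bool" where
  "separated_by X \<delta> \<longleftrightarrow> Inf {\<bar>x - y\<bar> | x y. x \<in> X \<and> y \<in> X \<and> x \<noteq> y} = \<delta> \<and> \<delta> > 0"

definition scattered :: "(int \<Rightarrow> real) \<Rightarrow> bool" where
  "scattered x \<longleftrightarrow> (\<exists>\<delta>. separated_by (range x) \<delta>)
     \<and> filterlim x at_top at_top \<and> filterlim x at_bot at_bot"

definition mq :: "real \<Rightarrow> nat \<Rightarrow> real \<Rightarrow> real" where
  "mq c k t = (t\<^sup>2 + c\<^sup>2) powr (real k - 1/2)"

definition Lp_norm_on :: "real \<Rightarrow> real \<Rightarrow> real \<Rightarrow> (real \<Rightarrow> real) \<Rightarrow> real" where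
  "Lp_norm_on p a b g = (LINT t:{a..b}|lborel. \<bar>g t\<bar> powr p) powr (1 / p)"

end

theory Submission
  imports Defs
begin


lemma binom_summable_half:
  fixes a :: real
  shows "summable (\<lambda>i. \<bar>a gchoose i\<bar> * (1/2)^i)"
proof -
  have e: "conv_radius (\<lambda>i. \<bar>a gchoose i\<bar>) = conv_radius (\<lambda>i. a gchoose i)"
    using conv_radius_norm[of "\<lambda>i. a gchoose i"] by (simp only: real_norm_def)
  have "ereal (norm (1/2::real)) < conv_radius (\<lambda>i. \<bar>a gchoose i\<bar>)"
    unfolding e using conv_radius_gchoose[of a] by (simp add: one_ereal_def)
  from summable_in_conv_radius[OF this] show ?thesis .
qed

lemma binom_rem:
  fixes a :: real and L :: nat
  shows "\<exists>K\<ge>0. \<forall>u. \<bar>u\<bar> \<le> 1/2 \<longrightarrow>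
     \<bar>(1+u) powr a - (\<Sum>i\<le>L. (a gchoose i) * u^i)\<bar> \<le> K * \<bar>u\<bar>^(Suc L)"
proof -
  define g where "g i = \<bar>a gchoose (i + Suc L)\<bar> * (1/2)^i" for i
  have sg0: "summable (\<lambda>i. \<bar>a gchoose (i + Suc L)\<bar> * (1/2)^(i + Suc L))"
    using summable_iff_shift[of "\<lambda>i. \<bar>a gchoose i\<bar> * (1/2)^i" "Suc L"] binom_summable_half[of a] by simp
  have "summable (\<lambda>i. 2^(Suc L) * (\<bar>a gchoose (i + Suc L)\<bar> * (1/2)^(i + Suc L)))"
    by (rule summable_mult[OF sg0])
  moreover have "(\<lambda>i. 2^(Suc L) * (\<bar>a gchoose (i + Suc L)\<bar> * (1/2)^(i + Suc L))) = g"
    by (auto simp: g_def power_add field_simps)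
  ultimately have sg: "summable g" by metis
  define K where "K = suminf g"
  have K0: "K \<ge> 0" unfolding K_def using sg by (intro suminf_nonneg) (auto simp: g_def)
  show ?thesis
  proof (intro exI[of _ K] conjI K0 allI impI)
    fix u :: real assume u: "\<bar>u\<bar> \<le> 1/2"
    hence u1: "\<bar>u\<bar> < 1" by simp
    have S: "(\<lambda>i. (a gchoose i) * u^i) sums (1+u) powr a" by (rule gen_binomial_real[OF u1])
    have S2: "(\<lambda>i. (a gchoose (i + Suc L)) * u^(i + Suc L)) sums ((1+u) powr a - (\<Sum>i<Suc L. (a gchoose i) * u^i))"
      using sums_iff_shift[of "\<lambda>i. (a gchoose i) * u^i" "Suc L" "(1+u) powr a - (\<Sum>i<Suc L. (a gchoose i) * u^i)"] S by simp
    have eq: "(\<Sum>i<Suc L. (a gchoose i) * u^i) = (\<Sum>i\<le>L. (a gchoose i) * u^i)"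
      using lessThan_Suc_atMost by simp
    have S3: "(\<lambda>i. u^(Suc L) * ((a gchoose (i + Suc L)) * u^i)) sums ((1+u) powr a - (\<Sum>i\<le>L. (a gchoose i) * u^i))"
      using S2 eq by (simp add: power_add mult_ac)
    have S4: "(\<lambda>i. (a gchoose (i + Suc L)) * u^i) sums (((1+u) powr a - (\<Sum>i\<le>L. (a gchoose i) * u^i)) / u^(Suc L))"
      if "u \<noteq> 0"
      using sums_divide[OF S3, of "u^Suc L"] that by (simp add: field_simps)
    show "\<bar>(1+u) powr a - (\<Sum>i\<le>L. (a gchoose i) * u^i)\<bar> \<le> K * \<bar>u\<bar>^(Suc L)"
    proof (cases "u = 0")
      case True
      have "(\<Sum>i\<le>L. (a gchoose i) * u^i) = 1" using True by (induct L) auto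
      then show ?thesis using True by simp
    next
      case False
      define R where "R = (1+u) powr a - (\<Sum>i\<le>L. (a gchoose i) * u^i)"
      have S5: "(\<lambda>i. (a gchoose (i + Suc L)) * u^i) sums (R / u^(Suc L))"
        using S4[OF False] R_def by simp
      have bnd: "\<bar>(a gchoose (i + Suc L)) * u^i\<bar> \<le> g i" for i
        unfolding g_def abs_mult power_abs
        by (intro mult_left_mono power_mono) (use u in auto)
      have "\<bar>R / u^(Suc L)\<bar> \<le> K"
      proof -
        have "summable (\<lambda>i. \<bar>(a gchoose (i + Suc L)) * u^i\<bar>)"
          by (rule summable_comparison_test'[OF sg, of 0]) (use bnd in simp)
        have "\<bar>R / u^(Suc L)\<bar> = \<bar>\<Sum>i. (a gchoose (i + Suc L)) * u^i\<bar>" using S5 sums_unique by metis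
        also have "\<dots> \<le> (\<Sum>i. \<bar>(a gchoose (i + Suc L)) * u^i\<bar>)"
          by (rule summable_rabs) fact
        also have "\<dots> \<le> suminf g"
          by (rule suminf_le[OF bnd \<open>summable (\<lambda>i. \<bar>(a gchoose (i + Suc L)) * u^i\<bar>)\<close> sg])
        finally show ?thesis by (simp add: K_def)
      qed
      hence "\<bar>R\<bar> / \<bar>u\<bar>^(Suc L) \<le> K" by (simp only: abs_divide power_abs)
      hence "\<bar>R\<bar> \<le> K * \<bar>u\<bar>^(Suc L)" using False by (simp add: divide_le_eq)
      thus ?thesis by (simp add: R_def)
    qed
  qed
qed




definition bb :: "real \<Rightarrow> nat \<Rightarrow> nat \<Rightarrow> real" where
  "bb c k n = ((real k - 1/2) gchoose n) * c^(2*n)"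
definition ee :: "nat \<Rightarrow> nat \<Rightarrow> real" where
  "ee k n = 2 * real k - 1 - 2 * real n"
definition PP :: "real \<Rightarrow> nat \<Rightarrow> nat \<Rightarrow> real \<Rightarrow> real" where
  "PP c k m t = (\<Sum>n\<le>m div 2. bb c k n * (ee k n gchoose (m - 2*n)) * (-t)^(m - 2*n))"

lemma le_half_iff: "((n::nat) \<le> m div 2) = (2*n \<le> m)" by presburger

lemma sum_reindex_pairs:
  fixes F :: "nat \<Rightarrow> nat \<Rightarrow> real"
  shows "(\<Sum>m\<le>M. \<Sum>n\<le>m div 2. F n (m - 2*n)) = (\<Sum>n\<le>M div 2. \<Sum>i\<le>M - 2*n. F n i)"
proof -
  have "(\<Sum>m\<le>M. \<Sum>n\<le>m div 2. F n (m - 2*n)) = (\<Sum>(m,n)\<in>Sigma {..M} (\<lambda>m. {..m div 2}). F n (m - 2*n))"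
    by (rule sum.Sigma[of "{..M}" "\<lambda>m. {..m div 2}" "\<lambda>m n. F n (m-2*n)"]) auto
  also have "\<dots> = (\<Sum>(n,i)\<in>Sigma {..M div 2} (\<lambda>n. {..M - 2*n}). F n i)"
  proof (rule sum.reindex_bij_witness[where i="\<lambda>(n,i). (2*n+i, n)" and j="\<lambda>(m,n). (n, m-2*n)"])
    fix a assume "a \<in> Sigma {..M} (\<lambda>m. {..m div 2})"
    then obtain m n where a: "a = (m,n)" "m \<le> M" "2*n \<le> m" by (auto simp: le_half_iff)
    show "(\<lambda>(n,i). (2*n+i, n)) ((\<lambda>(m,n). (n, m-2*n)) a) = a" using a by simp
    show "(\<lambda>(m,n). (n, m-2*n)) a \<in> Sigma {..M div 2} (\<lambda>n. {..M - 2*n})"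
      using a by (simp add: le_half_iff)
  next
    fix b assume "b \<in> Sigma {..M div 2} (\<lambda>n. {..M - 2*n})"
    then obtain n i where b: "b = (n,i)" "2*n \<le> M" "i \<le> M - 2*n" by (auto simp: le_half_iff)
    show "(\<lambda>(m,n). (n, m-2*n)) ((\<lambda>(n,i). (2*n+i, n)) b) = b" using b by simp
    show "(\<lambda>(n,i). (2*n+i, n)) b \<in> Sigma {..M} (\<lambda>m. {..m div 2})"
      using b by (simp add: le_half_iff)
  next
    fix a assume "a \<in> Sigma {..M} (\<lambda>m. {..m div 2})"
    then obtain m n where a: "a = (m,n)" "m \<le> M" "2*n \<le> m" by (auto simp: le_half_iff)
    show "(case (\<lambda>(m,n). (n, m-2*n)) a of (n, i) \<Rightarrow> F n i) = (case a of (m, n) \<Rightarrow> F n (m - 2 * n))"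
      using a by simp
  qed
  also have "\<dots> = (\<Sum>n\<le>M div 2. \<Sum>i\<le>M - 2*n. F n i)"
    by (rule sum.Sigma[of "{..M div 2}" "\<lambda>n. {..M-2*n}" F, symmetric]) auto
  finally show ?thesis .
qed

lemma powr_between:
  fixes y z e :: real
  assumes "y > 0" "y/2 \<le> z" "z \<le> 2*y"
  shows "z powr e \<le> 2 powr \<bar>e\<bar> * y powr e"
proof (cases "e \<ge> 0")
  case True
  have "z powr e \<le> (2*y) powr e" using assms True by (intro powr_mono2) auto
  also have "\<dots> = 2 powr e * y powr e" using assms by (simp add: powr_mult)
  finally show ?thesis using True by simp
next
  case False
  have "z powr e \<le> (y/2) powr e" using assms False by (intro powr_mono2') auto
  also have "\<dots> = y powr e / 2 powr e" using assms by (simp add: powr_divide)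
  also have "\<dots> = 2 powr (-e) * y powr e" by (simp add: powr_minus field_simps)
  finally show ?thesis using False by simp
qed




lemma powr_div_pow: "y > 0 \<Longrightarrow> y powr e / y^i = y powr (e - real i)"
  for y e :: real by (simp add: powr_diff powr_realpow)

lemma expansion:
  fixes c T :: real and k M :: nat
  assumes c: "c > 0" and T: "T \<ge> 0"
  shows "\<exists>C Y. Y \<ge> 1 \<and> (\<forall>y\<ge>Y. \<forall>t. \<bar>t\<bar> \<le> T \<longrightarrow>
     \<bar>mq c k (t - y) - (\<Sum>m\<le>M. PP c k m t * y powr (ee k 0 - real m))\<bar> \<le> C * y powr (ee k 0 - 1 - real M))"
proof -
  define \<alpha> where "\<alpha> = real k - 1/2"
  define N where "N = M div 2"
  obtain K1 where K1: "K1 \<ge> 0" "\<And>u. \<bar>u\<bar> \<le> 1/2 \<Longrightarrow>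
     \<bar>(1+u) powr \<alpha> - (\<Sum>i\<le>N. (\<alpha> gchoose i) * u^i)\<bar> \<le> K1 * \<bar>u\<bar>^(Suc N)"
    using binom_rem[of \<alpha> N] by blast
  have "\<forall>n. \<exists>K\<ge>0. \<forall>u. \<bar>u\<bar> \<le> 1/2 \<longrightarrow>
     \<bar>(1+u) powr (ee k n) - (\<Sum>i\<le>M - 2*n. (ee k n gchoose i) * u^i)\<bar> \<le> K * \<bar>u\<bar>^(Suc (M - 2*n))"
    using binom_rem by blast
  then obtain K2 where K2: "\<And>n. K2 n \<ge> 0" "\<And>n u. \<bar>u\<bar> \<le> 1/2 \<Longrightarrow>
     \<bar>(1+u) powr (ee k n) - (\<Sum>i\<le>M - 2*n. (ee k n gchoose i) * u^i)\<bar> \<le> K2 n * \<bar>u\<bar>^(Suc (M - 2*n))"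
    by metis
  define e' where "e' = ee k 0 - 2 * real N - 2"
  define C where "C = (\<Sum>n\<le>N. \<bar>bb c k n\<bar> * K2 n * T^(Suc (M - 2*n))) + K1 * c^(2 * Suc N) * 2 powr \<bar>e'\<bar>"
  define Y where "Y = 2*T + 4*c + 1"
  show ?thesis
  proof (rule exI[of _ C], rule exI[of _ Y], intro conjI allI impI)
    show "Y \<ge> 1" using c T by (simp add: Y_def)
    fix y t :: real assume y: "y \<ge> Y" and t: "\<bar>t\<bar> \<le> T"
    have y0: "y > 0" "y \<ge> 1" using y c T by (auto simp: Y_def)
    define z where "z = y - t"
    have z: "z \<ge> y/2" "z \<le> 2*y" "z \<ge> 2*c" "z > 0" using y t c T by (auto simp: z_def Y_def)
    define w where "w = c^2 / z^2"
    have w0: "w \<ge> 0" by (simp add: w_def)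
    have w1: "\<bar>w\<bar> \<le> 1/2"
    proof -
      have "c^2 \<le> (z/2)^2" using z c by (intro power_mono) auto
      hence "c^2 \<le> z^2/4" by (simp add: power_divide)
      hence "c^2 * 2 \<le> z^2" using zero_le_power2[of c] by linarith
      thus ?thesis using z w0 by (simp add: w_def divide_le_eq)
    qed
    define u where "u = -t/y"
    have u1: "\<bar>u\<bar> \<le> 1/2" using y0 t y c T by (auto simp: u_def Y_def abs_divide divide_le_eq)
    have uT: "\<bar>u\<bar> \<le> T / y" using y0 t by (simp add: u_def abs_divide divide_right_mono)
    define E1 where "E1 = (1+w) powr \<alpha> - (\<Sum>i\<le>N. (\<alpha> gchoose i) * w^i)"
    define E2 where "E2 n = (1+u) powr (ee k n) - (\<Sum>i\<le>M - 2*n. (ee k n gchoose i) * u^i)" for n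
    have zy: "z = y * (1 + u)" using y0 by (simp add: z_def u_def field_simps)
    have e0: "ee k 0 = 2 * \<alpha>" by (simp add: ee_def \<alpha>_def)
    have s1: "mq c k (t - y) = z powr (ee k 0) * (1+w) powr \<alpha>"
    proof -
      have h1: "z^2 * (1+w) = z^2 + c^2" using z by (simp add: w_def field_simps)
      have h2: "(t - y)^2 = z^2" by (simp add: z_def power2_commute)
      have "(t - y)^2 + c^2 = z^2 * (1 + w)" using h1 h2 by simp
      hence "mq c k (t - y) = (z^2 * (1+w)) powr \<alpha>" by (simp add: mq_def \<alpha>_def)
      also have "\<dots> = (z^2) powr \<alpha> * (1+w) powr \<alpha>" using w0 by (simp add: powr_mult)
      also have "(z^2) powr \<alpha> = z powr (ee k 0)"
      proof -
        have "z^2 = z powr 2" using z by (simp add: powr_numeral)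
        hence "(z^2) powr \<alpha> = z powr (2 * \<alpha>)" by (simp add: powr_powr)
        thus ?thesis by (simp add: e0)
      qed
      finally show ?thesis .
    qed
    have s2: "z powr (ee k 0) * ((\<alpha> gchoose n) * w^n) = bb c k n * z powr (ee k n)" for n
    proof -
      have "z powr (ee k 0) * w^n = c^(2*n) * (z powr (ee k 0) / z^(2*n))"
        by (simp add: w_def power_divide power_mult[symmetric] mult.commute)
      also have "z powr (ee k 0) / z^(2*n) = z powr (ee k n)"
        using z by (simp add: powr_div_pow ee_def)
      finally show ?thesis by (simp add: bb_def \<alpha>_def)
    qed
    have s3: "y powr (ee k n) * ((ee k n gchoose i) * u^i) =
        (ee k n gchoose i) * (-t)^i * y powr (ee k 0 - real (2*n+i))" for n i
    proof -
      have uu: "u^i = (-t)^i / y^i" unfolding u_def power_divide[symmetric] by simp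
      have "y powr (ee k n) * u^i = (-t)^i * (y powr (ee k n) / y^i)"
        unfolding uu by simp
      also have "y powr (ee k n) / y^i = y powr (ee k 0 - real (2*n+i))"
        using y0 by (simp add: powr_div_pow ee_def algebra_simps)
      finally show ?thesis by simp
    qed
    define F where "F n i = bb c k n * (ee k n gchoose i) * (-t)^i * y powr (ee k 0 - real (2*n+i))" for n i
    have decomp: "mq c k (t - y) = (\<Sum>n\<le>N. \<Sum>i\<le>M - 2*n. F n i)
        + (\<Sum>n\<le>N. bb c k n * y powr (ee k n) * E2 n) + z powr (ee k 0) * E1"
    proof -
      have "mq c k (t - y) = z powr (ee k 0) * (\<Sum>i\<le>N. (\<alpha> gchoose i) * w^i) + z powr (ee k 0) * E1"
        by (simp add: s1 E1_def algebra_simps)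
      also have "z powr (ee k 0) * (\<Sum>i\<le>N. (\<alpha> gchoose i) * w^i) = (\<Sum>n\<le>N. bb c k n * z powr (ee k n))"
        by (simp add: sum_distrib_left s2)
      also have "\<dots> = (\<Sum>n\<le>N. bb c k n * y powr (ee k n) * ((\<Sum>i\<le>M - 2*n. (ee k n gchoose i) * u^i) + E2 n))"
        using y0 zy z by (intro sum.cong refl) (simp add: E2_def powr_mult)
      also have "\<dots> = (\<Sum>n\<le>N. (\<Sum>i\<le>M - 2*n. F n i) + bb c k n * y powr (ee k n) * E2 n)"
      proof (intro sum.cong refl)
        fix n
        have "(\<Sum>i\<le>M - 2*n. F n i) = (\<Sum>i\<le>M - 2*n. bb c k n * (y powr (ee k n) * ((ee k n gchoose i) * u^i)))"
          by (intro sum.cong refl) (simp only: s3 F_def mult.assoc)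
        also have "\<dots> = bb c k n * y powr (ee k n) * (\<Sum>i\<le>M - 2*n. (ee k n gchoose i) * u^i)"
          by (simp add: sum_distrib_left mult.assoc)
        finally show "bb c k n * y powr (ee k n) * ((\<Sum>i\<le>M - 2*n. (ee k n gchoose i) * u^i) + E2 n) =
            (\<Sum>i\<le>M - 2*n. F n i) + bb c k n * y powr (ee k n) * E2 n"
          by (simp add: distrib_left)
      qed
      also have "\<dots> = (\<Sum>n\<le>N. \<Sum>i\<le>M - 2*n. F n i) + (\<Sum>n\<le>N. bb c k n * y powr (ee k n) * E2 n)"
        by (simp add: sum.distrib)
      finally show ?thesis by simp
    qed
    have main: "(\<Sum>n\<le>N. \<Sum>i\<le>M - 2*n. F n i) = (\<Sum>m\<le>M. PP c k m t * y powr (ee k 0 - real m))"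
    proof -
      have "(\<Sum>m\<le>M. PP c k m t * y powr (ee k 0 - real m)) = (\<Sum>m\<le>M. \<Sum>n\<le>m div 2. F n (m - 2*n))"
      proof (intro sum.cong refl)
        fix m assume "m \<in> {..M}"
        have "PP c k m t * y powr (ee k 0 - real m) = (\<Sum>n\<le>m div 2. bb c k n * (ee k n gchoose (m - 2*n)) * (-t)^(m - 2*n) * y powr (ee k 0 - real m))"
          by (simp add: PP_def sum_distrib_right)
        also have "\<dots> = (\<Sum>n\<le>m div 2. F n (m - 2*n))"
        proof (intro sum.cong refl)
          fix n assume "n \<in> {..m div 2}"
          hence "2*n + (m - 2*n) = m" by auto
          thus "bb c k n * (ee k n gchoose (m - 2*n)) * (-t)^(m - 2*n) * y powr (ee k 0 - real m) = F n (m - 2*n)"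
            by (simp add: F_def)
        qed
        finally show "PP c k m t * y powr (ee k 0 - real m) = (\<Sum>n\<le>m div 2. F n (m - 2*n))" .
      qed
      thus ?thesis using sum_reindex_pairs[of F M] by (simp add: N_def)
    qed
    have bEa: "\<bar>\<Sum>n\<le>N. bb c k n * y powr (ee k n) * E2 n\<bar> \<le>
        (\<Sum>n\<le>N. \<bar>bb c k n\<bar> * K2 n * T^(Suc (M - 2*n))) * y powr (ee k 0 - 1 - real M)"
    proof -
      have "\<bar>\<Sum>n\<le>N. bb c k n * y powr (ee k n) * E2 n\<bar> \<le> (\<Sum>n\<le>N. \<bar>bb c k n * y powr (ee k n) * E2 n\<bar>)"
        by (rule sum_abs)
      also have "\<dots> \<le> (\<Sum>n\<le>N. \<bar>bb c k n\<bar> * K2 n * T^(Suc (M - 2*n)) * y powr (ee k 0 - 1 - real M))"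
      proof (intro sum_mono)
        fix n assume n: "n \<in> {..N}"
        have n2: "2*n \<le> M" using n by (auto simp: N_def)
        have "\<bar>E2 n\<bar> \<le> K2 n * \<bar>u\<bar>^(Suc (M - 2*n))" using K2(2)[OF u1] by (simp add: E2_def)
        also have "\<dots> \<le> K2 n * (T/y)^(Suc (M - 2*n))"
          by (rule mult_left_mono[OF power_mono[OF uT]]) (use K2(1)[of n] in auto)
        finally have E: "\<bar>E2 n\<bar> \<le> K2 n * (T/y)^(Suc (M - 2*n))" .
        have yy: "y powr (ee k n) * (T/y)^(Suc (M - 2*n)) = T^(Suc (M - 2*n)) * y powr (ee k 0 - 1 - real M)"
        proof -
          have "y powr (ee k n) / y^(Suc (M - 2*n)) = y powr (ee k n - real (Suc (M - 2*n)))"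
            by (rule powr_div_pow[OF y0(1)])
          also have "ee k n - real (Suc (M - 2*n)) = ee k 0 - 1 - real M"
            using n2 by (simp add: ee_def of_nat_diff)
          finally have h: "y powr (ee k n) / y^(Suc (M - 2*n)) = y powr (ee k 0 - 1 - real M)" .
          define j where "j = Suc (M - 2*n)"
          have "y powr (ee k n) * (T/y)^j = T^j * (y powr (ee k n) / y^j)"
            by (simp add: power_divide)
          also have "y powr (ee k n) / y^j = y powr (ee k 0 - 1 - real M)" using h unfolding j_def .
          finally show ?thesis unfolding j_def .
        qed
        have "\<bar>bb c k n * y powr (ee k n) * E2 n\<bar> = \<bar>bb c k n\<bar> * (y powr (ee k n) * \<bar>E2 n\<bar>)"
          by (simp add: abs_mult)
        also have "\<dots> \<le> \<bar>bb c k n\<bar> * (y powr (ee k n) * (K2 n * (T/y)^(Suc (M - 2*n))))"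
          by (rule mult_left_mono[OF mult_left_mono[OF E]]) auto
        also have "\<dots> = \<bar>bb c k n\<bar> * K2 n * (y powr (ee k n) * (T/y)^(Suc (M - 2*n)))"
          by (simp only: mult_ac)
        also have "\<dots> = \<bar>bb c k n\<bar> * K2 n * (T^(Suc (M - 2*n)) * y powr (ee k 0 - 1 - real M))"
          by (simp only: yy)
        also have "\<dots> = \<bar>bb c k n\<bar> * K2 n * T^(Suc (M - 2*n)) * y powr (ee k 0 - 1 - real M)"
          by (simp only: mult_ac)
        finally show "\<bar>bb c k n * y powr (ee k n) * E2 n\<bar> \<le> \<bar>bb c k n\<bar> * K2 n * T^(Suc (M - 2*n)) * y powr (ee k 0 - 1 - real M)" .
      qed
      also have "\<dots> = (\<Sum>n\<le>N. \<bar>bb c k n\<bar> * K2 n * T^(Suc (M - 2*n))) * y powr (ee k 0 - 1 - real M)"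
        by (simp add: sum_distrib_right)
      finally show ?thesis .
    qed
    have bEb: "\<bar>z powr (ee k 0) * E1\<bar> \<le> K1 * c^(2 * Suc N) * 2 powr \<bar>e'\<bar> * y powr (ee k 0 - 1 - real M)"
    proof -
      have E: "\<bar>E1\<bar> \<le> K1 * w^(Suc N)" using K1(2)[OF w1] w0 by (simp add: E1_def)
      have zw: "z powr (ee k 0) * w^(Suc N) = c^(2 * Suc N) * z powr e'"
      proof -
        have wp: "w^(Suc N) = c^(2 * Suc N) / z^(2 * Suc N)"
          by (simp only: w_def power_divide power_mult)
        have "z powr (ee k 0) * w^(Suc N) = c^(2 * Suc N) * (z powr (ee k 0) / z^(2 * Suc N))"
          unfolding wp by (simp only: times_divide_eq_right mult.commute)
        also have "z powr (ee k 0) / z^(2 * Suc N) = z powr (ee k 0 - real (2 * Suc N))"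
          by (rule powr_div_pow) (use z in auto)
        also have "ee k 0 - real (2 * Suc N) = e'" by (simp add: e'_def)
        finally show ?thesis .
      qed
      have ye: "y powr e' \<le> y powr (ee k 0 - 1 - real M)"
        using y0 by (intro powr_mono) (auto simp: e'_def N_def)
      have "\<bar>z powr (ee k 0) * E1\<bar> = z powr (ee k 0) * \<bar>E1\<bar>" by (simp add: abs_mult)
      also have "\<dots> \<le> z powr (ee k 0) * (K1 * w^(Suc N))" by (rule mult_left_mono[OF E]) auto
      also have "\<dots> = K1 * c^(2 * Suc N) * z powr e'" using zw by (simp add: mult_ac)
      also have "\<dots> \<le> K1 * c^(2 * Suc N) * (2 powr \<bar>e'\<bar> * y powr e')"
        using K1(1) c by (intro mult_left_mono[OF powr_between[OF y0(1) z(1) z(2)]]) auto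
      also have "\<dots> \<le> K1 * c^(2 * Suc N) * (2 powr \<bar>e'\<bar> * y powr (ee k 0 - 1 - real M))"
        using K1(1) c by (intro mult_left_mono[OF mult_left_mono[OF ye]]) auto
      finally show ?thesis by (simp add: mult_ac)
    qed
    have "\<bar>mq c k (t - y) - (\<Sum>m\<le>M. PP c k m t * y powr (ee k 0 - real m))\<bar>
          = \<bar>(\<Sum>n\<le>N. bb c k n * y powr (ee k n) * E2 n) + z powr (ee k 0) * E1\<bar>"
      using decomp main by simp
    also have "\<dots> \<le> \<bar>\<Sum>n\<le>N. bb c k n * y powr (ee k n) * E2 n\<bar> + \<bar>z powr (ee k 0) * E1\<bar>"
      by (rule abs_triangle_ineq)
    also have "\<dots> \<le> C * y powr (ee k 0 - 1 - real M)"
    proof -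
      have "C * y powr (ee k 0 - 1 - real M) = (\<Sum>n\<le>N. \<bar>bb c k n\<bar> * K2 n * T^(Suc (M - 2*n))) * y powr (ee k 0 - 1 - real M)
         + K1 * c^(2 * Suc N) * 2 powr \<bar>e'\<bar> * y powr (ee k 0 - 1 - real M)"
        unfolding C_def by (simp only: distrib_right)
      thus ?thesis using bEa bEb by linarith
    qed
    finally show "\<bar>mq c k (t - y) - (\<Sum>m\<le>M. PP c k m t * y powr (ee k 0 - real m))\<bar> \<le> C * y powr (ee k 0 - 1 - real M)" .
  qed
qed




definition combo :: "real \<Rightarrow> nat \<Rightarrow> (int \<Rightarrow> real) \<Rightarrow> nat \<Rightarrow> (nat \<Rightarrow> real) \<Rightarrow> real \<Rightarrow> real" where
  "combo c k x N coef t = (\<Sum>j=1..N. coef j * mq c k (t - x (int j)))"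

definition inV :: "real \<Rightarrow> nat \<Rightarrow> (int \<Rightarrow> real) \<Rightarrow> real \<Rightarrow> real \<Rightarrow> (real \<Rightarrow> real) \<Rightarrow> bool" where
  "inV c k x a b g \<longleftrightarrow> (\<forall>\<eta>>0. \<exists>N coef. \<forall>t\<in>{a..b}. \<bar>g t - combo c k x N coef t\<bar> \<le> \<eta>)"

lemma combo_pad:
  assumes "N1 \<le> N"
  shows "combo c k x N (\<lambda>j. if j \<le> N1 then coef j else 0) t = combo c k x N1 coef t"
  unfolding combo_def using assms
  by (intro sum.mono_neutral_cong_right) auto

lemma combo_add: "combo c k x N (\<lambda>j. f j + g j) t = combo c k x N f t + combo c k x N g t"
  by (simp add: combo_def sum.distrib distrib_right)

lemma combo_scale: "combo c k x N (\<lambda>j. r * f j) t = r * combo c k x N f t"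
  by (simp add: combo_def sum_distrib_left mult.assoc)

lemma inV_cong:
  assumes "inV c k x a b h" "\<And>t. t \<in> {a..b} \<Longrightarrow> g t = h t"
  shows "inV c k x a b g"
  using assms unfolding inV_def by (metis)

lemma inV_add:
  assumes "inV c k x a b g1" "inV c k x a b g2"
  shows "inV c k x a b (\<lambda>t. g1 t + g2 t)"
  unfolding inV_def
proof (intro allI impI)
  fix \<eta> :: real assume "\<eta> > 0"
  hence h2: "\<eta>/2 > 0" by simp
  obtain N1 coef1 where 1: "\<forall>t\<in>{a..b}. \<bar>g1 t - combo c k x N1 coef1 t\<bar> \<le> \<eta>/2"
    using assms(1) h2 unfolding inV_def by blast
  obtain N2 coef2 where 2: "\<forall>t\<in>{a..b}. \<bar>g2 t - combo c k x N2 coef2 t\<bar> \<le> \<eta>/2"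
    using assms(2) h2 unfolding inV_def by blast
  define N where "N = max N1 N2"
  define coef where "coef j = (if j \<le> N1 then coef1 j else 0) + (if j \<le> N2 then coef2 j else 0)" for j
  have eq: "combo c k x N coef t = combo c k x N1 coef1 t + combo c k x N2 coef2 t" for t
    unfolding coef_def combo_add
    by (simp add: combo_pad N_def)
  show "\<exists>N coef. \<forall>t\<in>{a..b}. \<bar>g1 t + g2 t - combo c k x N coef t\<bar> \<le> \<eta>"
  proof (intro exI ballI)
    fix t assume t: "t \<in> {a..b}"
    show "\<bar>g1 t + g2 t - combo c k x N coef t\<bar> \<le> \<eta>"
      using 1[rule_format, OF t] 2[rule_format, OF t] unfolding eq by linarith
  qed
qed

lemma inV_zero: "inV c k x a b (\<lambda>t. 0)"
  unfolding inV_def by (intro allI impI exI[of _ 0]) (simp add: combo_def)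

lemma inV_scale:
  assumes "inV c k x a b g"
  shows "inV c k x a b (\<lambda>t. r * g t)"
proof (cases "r = 0")
  case True
  then show ?thesis using inV_zero by simp
next
  case False
  show ?thesis unfolding inV_def
  proof (intro allI impI)
    fix \<eta> :: real assume "\<eta> > 0"
    hence "\<eta> / \<bar>r\<bar> > 0" using False by simp
    then obtain N coef where 1: "\<forall>t\<in>{a..b}. \<bar>g t - combo c k x N coef t\<bar> \<le> \<eta> / \<bar>r\<bar>"
      using assms unfolding inV_def by blast
    show "\<exists>N coef. \<forall>t\<in>{a..b}. \<bar>r * g t - combo c k x N coef t\<bar> \<le> \<eta>"
    proof (intro exI[of _ N] exI[of _ "\<lambda>j. r * coef j"] ballI)
      fix t assume t: "t \<in> {a..b}"
      have "\<bar>r * g t - combo c k x N (\<lambda>j. r * coef j) t\<bar> = \<bar>r\<bar> * \<bar>g t - combo c k x N coef t\<bar>"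
        unfolding combo_scale by (simp add: abs_mult[symmetric] right_diff_distrib)
      also have "\<dots> \<le> \<bar>r\<bar> * (\<eta> / \<bar>r\<bar>)" using 1 t by (intro mult_left_mono) auto
      also have "\<dots> = \<eta>" using False by simp
      finally show "\<bar>r * g t - combo c k x N (\<lambda>j. r * coef j) t\<bar> \<le> \<eta>" .
    qed
  qed
qed

lemma inV_sum:
  assumes "finite S" "\<And>i. i \<in> S \<Longrightarrow> inV c k x a b (g i)"
  shows "inV c k x a b (\<lambda>t. \<Sum>i\<in>S. g i t)"
  using assms
proof (induction S rule: finite_induct)
  case empty
  then show ?case using inV_zero by simp
next
  case (insert i S)
  have "inV c k x a b (\<lambda>t. g i t + (\<Sum>i\<in>S. g i t))"
    using insert by (intro inV_add) auto
  then show ?case using insert by simp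
qed

lemma inV_limit:
  assumes "\<And>\<eta>. \<eta> > 0 \<Longrightarrow> \<exists>h. inV c k x a b h \<and> (\<forall>t\<in>{a..b}. \<bar>g t - h t\<bar> \<le> \<eta>)"
  shows "inV c k x a b g"
  unfolding inV_def
proof (intro allI impI)
  fix \<eta> :: real assume "\<eta> > 0"
  hence h2: "\<eta>/2 > 0" by simp
  obtain h where h: "inV c k x a b h" "\<forall>t\<in>{a..b}. \<bar>g t - h t\<bar> \<le> \<eta>/2" using assms[OF h2] by blast
  obtain N coef where 1: "\<forall>t\<in>{a..b}. \<bar>h t - combo c k x N coef t\<bar> \<le> \<eta>/2"
    using h(1) h2 unfolding inV_def by blast
  show "\<exists>N coef. \<forall>t\<in>{a..b}. \<bar>g t - combo c k x N coef t\<bar> \<le> \<eta>"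
  proof (intro exI[of _ N] exI[of _ coef] ballI)
    fix t assume t: "t \<in> {a..b}"
    have "\<bar>g t - h t\<bar> \<le> \<eta>/2" "\<bar>h t - combo c k x N coef t\<bar> \<le> \<eta>/2" using h(2) 1 t by auto
    thus "\<bar>g t - combo c k x N coef t\<bar> \<le> \<eta>" by linarith
  qed
qed

lemma inV_translate:
  assumes "j \<ge> 1"
  shows "inV c k x a b (\<lambda>t. mq c k (t - x (int j)))"
  unfolding inV_def
proof (intro allI impI exI[of _ j] exI[of _ "\<lambda>i. if i = j then 1 else 0"] ballI)
  fix \<eta> t :: real assume "\<eta> > 0"
  have "combo c k x j (\<lambda>i. if i = j then 1 else 0) t = (\<Sum>i\<in>{1..j}. if i = j then mq c k (t - x (int i)) else 0)"
    unfolding combo_def by (intro sum.cong) auto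
  also have "\<dots> = mq c k (t - x (int j))" using assms by (simp add: sum.delta)
  finally show "\<bar>mq c k (t - x (int j)) - combo c k x j (\<lambda>i. if i = j then 1 else 0) t\<bar> \<le> \<eta>"
    using \<open>\<eta> > 0\<close> by simp
qed




lemma aux_ring:
  fixes r p Q M S :: real
  assumes "r * p = 1"
  shows "Q - r * (M + (-1) * S) = - (r * (M - (S + Q * p)))"
proof -
  have "r * (Q * p) = Q" using assms by (metis mult.left_commute mult_1_right)
  thus ?thesis by (simp add: ring_distribs)
qed

lemma PP_inV:
  assumes c: "c > 0" and xl: "filterlim x at_top at_top"
  shows "inV c k x a b (PP c k m)"
proof (induction m rule: less_induct)
  case (less m)
  define T where "T = max \<bar>a\<bar> \<bar>b\<bar>"
  have T0: "T \<ge> 0" by (simp add: T_def)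
  have tT: "\<bar>t\<bar> \<le> T" if "t \<in> {a..b}" for t using that by (auto simp: T_def)
  obtain C Y where CY: "Y \<ge> 1" "\<forall>y\<ge>Y. \<forall>t. \<bar>t\<bar> \<le> T \<longrightarrow>
     \<bar>mq c k (t - y) - (\<Sum>l\<le>m. PP c k l t * y powr (ee k 0 - real l))\<bar> \<le> C * y powr (ee k 0 - 1 - real m)"
    using expansion[OF c T0, of k m] by blast
  show ?case
  proof (rule inV_limit)
    fix \<eta> :: real assume \<eta>: "\<eta> > 0"
    define Z where "Z = max Y ((\<bar>C\<bar> + 1) / \<eta>)"
    have "\<forall>Z. eventually (\<lambda>n. Z \<le> x n) at_top" using xl unfolding filterlim_at_top by blast
    then obtain n0 where n0: "\<forall>n\<ge>n0. Z \<le> x n" unfolding eventually_at_top_linorder by blast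
    define j where "j = nat (max n0 1)"
    have j1: "j \<ge> 1" by (simp add: j_def)
    have jn: "int j = max n0 1" by (simp add: j_def)
    define y where "y = x (int j)"
    have yZ: "Z \<le> y" using n0 jn unfolding y_def by auto
    have yY: "y \<ge> Y" "y \<ge> (\<bar>C\<bar> + 1) / \<eta>" using yZ by (auto simp: Z_def)
    have y0: "y > 0" using yY CY(1) by linarith
    define r where "r = y powr (real m - ee k 0)"
    define S where "S = (\<lambda>t. \<Sum>l\<in>{..<m}. y powr (ee k 0 - real l) * PP c k l t)"
    define h where "h = (\<lambda>t. r * (mq c k (t - x (int j)) + (-1) * S t))"
    have hV: "inV c k x a b h"
    proof -
      have 1: "inV c k x a b S"
        unfolding S_def using less by (intro inV_sum inV_scale) auto
      have "inV c k x a b (\<lambda>t. mq c k (t - x (int j)) + (-1) * S t)"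
        by (intro inV_add inV_translate inV_scale 1 j1)
      hence "inV c k x a b (\<lambda>t. r * (mq c k (t - x (int j)) + (-1) * S t))" by (rule inV_scale)
      thus ?thesis unfolding h_def .
    qed
    show "\<exists>h. inV c k x a b h \<and> (\<forall>t\<in>{a..b}. \<bar>PP c k m t - h t\<bar> \<le> \<eta>)"
    proof (intro exI[of _ h] conjI hV ballI)
      fix t assume t: "t \<in> {a..b}"
      have E: "\<bar>mq c k (t - y) - (\<Sum>l\<le>m. PP c k l t * y powr (ee k 0 - real l))\<bar> \<le> C * y powr (ee k 0 - 1 - real m)"
        using CY(2) yY tT[OF t] by auto
      have split: "(\<Sum>l\<le>m. PP c k l t * y powr (ee k 0 - real l)) = S t + PP c k m t * y powr (ee k 0 - real m)"
        by (simp add: S_def lessThan_Suc_atMost[symmetric] mult.commute)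
      have r1: "r * y powr (ee k 0 - real m) = 1" using y0 by (simp add: r_def powr_add[symmetric])
      have r0: "r \<ge> 0" by (simp add: r_def)
      have "PP c k m t - h t = - (r * (mq c k (t - y) - (S t + PP c k m t * y powr (ee k 0 - real m))))"
        unfolding h_def y_def[symmetric] by (rule aux_ring[OF r1])
      hence "\<bar>PP c k m t - h t\<bar> = r * \<bar>mq c k (t - y) - (\<Sum>l\<le>m. PP c k l t * y powr (ee k 0 - real l))\<bar>"
        using r0 by (simp add: split abs_mult)
      also have "\<dots> \<le> r * (C * y powr (ee k 0 - 1 - real m))" by (rule mult_left_mono[OF E r0])
      also have "r * (C * y powr (ee k 0 - 1 - real m)) = C * (r * y powr (ee k 0 - 1 - real m))" by simp
      also have "r * y powr (ee k 0 - 1 - real m) = y powr (-1)"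
        using y0 by (simp add: r_def powr_add[symmetric])
      also have "y powr (-1) = 1 / y" using y0 by (simp add: powr_minus divide_inverse)
      also have "C * (1 / y) \<le> \<eta>"
      proof -
        have "\<bar>C\<bar> + 1 \<le> \<eta> * y" using yY(2) \<eta> by (simp add: divide_le_eq mult.commute)
        hence "C \<le> \<eta> * y" by linarith
        thus ?thesis using y0 by (simp add: divide_le_eq)
      qed
      finally show "\<bar>PP c k m t - h t\<bar> \<le> \<eta>" .
    qed
  qed
qed

lemma bb_k_nonzero:
  assumes "c > 0" shows "bb c k k \<noteq> 0"
proof -
  have "(\<Prod>i\<in>{0..<k}. real k - 1/2 - real i) \<noteq> 0"
  proof -
    have "real k - 1/2 - real i \<noteq> 0" if "i \<in> {0..<k}" for i
    proof -
      have "real i + 1 \<le> real k" using that by simp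
      thus ?thesis by linarith
    qed
    thus ?thesis by (simp add: prod_zero_iff)
  qed
  hence "(real k - 1/2) gchoose k \<noteq> 0" by (simp add: gbinomial_prod_rev)
  thus ?thesis using assms by (simp add: bb_def)
qed

lemma mono_inV:
  assumes c: "c > 0" and xl: "filterlim x at_top at_top"
  shows "inV c k x a b (\<lambda>t. t^d)"
proof (induction d rule: less_induct)
  case (less d)
  define D where "D = (2*k+d) div 2"
  define f where "f n t = bb c k n * (ee k n gchoose (2*k+d - 2*n)) * (-t)^(2*k+d-2*n)" for n t
  have PPeq: "PP c k (2*k+d) t = (\<Sum>n\<le>D. f n t)" for t by (simp add: PP_def f_def D_def)
  have kD: "k \<le> D" by (simp add: D_def le_half_iff)
  have f0: "f n t = 0" if n: "n < k" for n t
  proof -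
    have "ee k n = real (2*k - 1 - 2*n)" using n by (simp add: ee_def of_nat_diff)
    hence "ee k n gchoose (2*k+d-2*n) = real ((2*k-1-2*n) choose (2*k+d-2*n))" by (simp add: binomial_gbinomial)
    also have "(2*k-1-2*n) choose (2*k+d-2*n) = 0" using n by (intro binomial_eq_0) linarith
    finally show ?thesis by (simp add: f_def)
  qed
  have fk: "f k t = bb c k k * t^d" for t
  proof -
    have eek: "ee k k = -1" by (simp add: ee_def)
    have g: "((-1::real) gchoose d) = (-1)^d"
      using gbinomial_minus[of "1::real" d] binomial_gbinomial[of d d, where 'a=real] by simp
    have p: "(-1::real)^d * (-t)^d = t^d" by (simp add: power_mult_distrib[symmetric])
    have "f k t = bb c k k * ((-1)^d * (-t)^d)" by (simp add: f_def eek g)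
    thus ?thesis using p by simp
  qed
  have sum_split: "(\<Sum>n\<le>D. f n t) = f k t + (\<Sum>n\<in>{Suc k..D}. f n t)" for t
  proof -
    have "(\<Sum>n\<le>D. f n t) = (\<Sum>n\<in>{k..D}. f n t)"
      by (rule sum.mono_neutral_right) (auto simp: f0)
    also have "{k..D} = insert k {Suc k..D}" using kD by (simp add: atLeastAtMost_insertL)
    also have "(\<Sum>n\<in>insert k {Suc k..D}. f n t) = f k t + (\<Sum>n\<in>{Suc k..D}. f n t)" by simp
    finally show ?thesis .
  qed
  have other: "inV c k x a b (\<lambda>t. \<Sum>n\<in>{Suc k..D}. f n t)"
  proof (rule inV_sum)
    fix n assume n: "n \<in> {Suc k..D}"
    define e where "e = 2*k+d-2*n"
    have "n \<le> D" using n by simp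
    hence n2: "2*n \<le> 2*k+d" unfolding D_def le_half_iff .
    have nk: "Suc k \<le> n" using n by simp
    have e2: "e + 2*n = 2*k + d" using n2 unfolding e_def by simp
    have ed: "e < d" using nk e2 by linarith
    have "f n t = (bb c k n * (ee k n gchoose e) * (-1)^e) * t^e" for t
      unfolding f_def e_def[symmetric] power_minus[of t e] by (simp only: mult.assoc)
    hence "f n = (\<lambda>t. (bb c k n * (ee k n gchoose e) * (-1)^e) * t^e)" by (intro ext)
    thus "inV c k x a b (f n)" using inV_scale[OF less[OF ed]] by simp
  qed simp
  have PPV: "inV c k x a b (PP c k (2*k+d))" by (rule PP_inV[OF c xl])
  have "inV c k x a b (\<lambda>t. (1 / bb c k k) * (PP c k (2*k+d) t + (-1) * (\<Sum>n\<in>{Suc k..D}. f n t)))"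
    by (intro inV_scale inV_add PPV other)
  thus ?case
    by (rule inV_cong) (simp add: PPeq sum_split fk bb_k_nonzero[OF c])
qed

lemma poly_inV:
  assumes c: "c > 0" and xl: "filterlim x at_top at_top"
  shows "inV c k x a b (\<lambda>t. \<Sum>i\<le>n. q i * t^i)"
  using mono_inV[OF c xl] by (intro inV_sum inV_scale) auto




theorem corollary3p2:
  fixes c :: real and k :: nat and p :: real and x :: "int \<Rightarrow> real"
    and a b :: real and f :: "real \<Rightarrow> real" and \<epsilon> :: real
  assumes "c > 0" and "k \<ge> 1" and "1 \<le> p"
    and "scattered x"
    and "\<epsilon> > 0" and "continuous_on {a..b} f"
  shows "\<exists>(N::nat) (coef :: nat \<Rightarrow> real).
           Lp_norm_on p a b (\<lambda>t. f t - (\<Sum>j=1..N. coef j * mq c k (t - x (int j)))) < \<epsilon>"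
proof -
  have xl: "filterlim x at_top at_top" using assms(4) unfolding scattered_def by blast
  show ?thesis
  proof (cases "a \<le> b")
    case False
    hence "{a..b} = {}" by simp
    hence "Lp_norm_on p a b g = 0" for g
      unfolding Lp_norm_on_def set_lebesgue_integral_def by simp
    thus ?thesis using assms(5) by auto
  next
    case True
    define L where "L = b - a + 1"
    have L1: "L \<ge> 1" using True by (simp add: L_def)
    define \<delta> where "\<delta> = \<epsilon> / (2 * L)"
    have \<delta>0: "\<delta> > 0" using assms(5) L1 by (simp add: \<delta>_def)
    have \<delta>2: "\<delta>/2 > 0" using \<delta>0 by simp
    obtain g where g: "real_polynomial_function g" "\<And>t. t \<in> {a..b} \<Longrightarrow> \<bar>f t - g t\<bar> < \<delta>/2"
      using Stone_Weierstrass_real_polynomial_function[OF compact_Icc assms(6) \<delta>2] by blast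
    obtain q n where gq: "g = (\<lambda>t. \<Sum>i\<le>n. q i * t^i)" using g(1) real_polynomial_function_iff_sum by blast
    have "inV c k x a b g" unfolding gq by (rule poly_inV[OF assms(1) xl])
    then obtain N coef where NC: "\<forall>t\<in>{a..b}. \<bar>g t - combo c k x N coef t\<bar> \<le> \<delta>/2"
      using \<delta>2 unfolding inV_def by blast
    define h where "h = (\<lambda>t. f t - (\<Sum>j=1..N. coef j * mq c k (t - x (int j))))"
    have hb: "\<bar>h t\<bar> < \<delta>" if t: "t \<in> {a..b}" for t
    proof -
      have "\<bar>f t - g t\<bar> < \<delta>/2" "\<bar>g t - combo c k x N coef t\<bar> \<le> \<delta>/2" using g(2) NC t by auto
      thus ?thesis unfolding h_def combo_def by linarith
    qed
    have int_le: "(LINT t:{a..b}|lborel. \<bar>h t\<bar> powr p) \<le> \<delta> powr p * (b - a)"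
    proof -
      have "(LINT t:{a..b}|lborel. \<bar>h t\<bar> powr p) = integral\<^sup>L lborel (\<lambda>t. indicator {a..b} t *\<^sub>R (\<bar>h t\<bar> powr p))"
        by (simp add: set_lebesgue_integral_def)
      also have "\<dots> \<le> integral\<^sup>L lborel (\<lambda>t. indicator {a..b} t *\<^sub>R (\<delta> powr p))"
      proof (rule integral_mono')
        have "integrable lborel (indicator {a..b} :: real \<Rightarrow> real)" using True by (intro integrable_real_indicator) auto
        thus "integrable lborel (\<lambda>t. indicator {a..b} t *\<^sub>R (\<delta> powr p))" by (rule integrable_scaleR_left)
      next
        fix t :: real
        show "indicator {a..b} t *\<^sub>R (\<bar>h t\<bar> powr p) \<le> indicator {a..b} t *\<^sub>R (\<delta> powr p)"
        proof (cases "t \<in> {a..b}")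
          case True
          have "\<bar>h t\<bar> powr p \<le> \<delta> powr p" using hb[OF True] assms(3) by (intro powr_mono2) auto
          thus ?thesis using True by simp
        qed simp
        show "0 \<le> indicator {a..b} t *\<^sub>R (\<delta> powr p)" by (simp add: indicator_def)
      qed
      also have "\<dots> = \<delta> powr p * (b - a)"
        using set_integral_const[of "{a..b}" lborel "\<delta> powr p"] True
        by (simp add: set_lebesgue_integral_def mult.commute)
      finally show ?thesis .
    qed
    have int0: "0 \<le> (LINT t:{a..b}|lborel. \<bar>h t\<bar> powr p)"
      unfolding set_lebesgue_integral_def by (intro integral_nonneg_AE AE_I2) (simp add: indicator_def)
    have "Lp_norm_on p a b h \<le> (\<delta> powr p * (b - a)) powr (1/p)"
      unfolding Lp_norm_on_def using int_le int0 assms(3) by (intro powr_mono2) auto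
    also have "\<dots> \<le> (\<delta> powr p * L) powr (1/p)"
      using assms(3) True by (intro powr_mono2 mult_left_mono) (auto simp: L_def)
    also have "\<dots> = (\<delta> powr p) powr (1/p) * L powr (1/p)"
      using L1 \<delta>0 by (simp add: powr_mult)
    also have "(\<delta> powr p) powr (1/p) = \<delta>" using assms(3) \<delta>0 by (simp add: powr_powr)
    also have "L powr (1/p) \<le> L powr 1" using L1 assms(3) by (intro powr_mono) auto
    hence "\<delta> * L powr (1/p) \<le> \<delta> * L" using \<delta>0 L1 by (intro mult_left_mono) auto
    also have "\<delta> * L = \<epsilon> / 2" using L1 by (simp add: \<delta>_def)
    also have "\<dots> < \<epsilon>" using assms(5) by simp
    finally have "Lp_norm_on p a b h < \<epsilon>" .
    thus ?thesis unfolding h_def by blast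
  qed
qed


end
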